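(* Let $d\ge2$, let $\mathbf A,\mathbf B\in\overline{\mathbb Q}[t]$ be nonzero coprime polynomials, $\mathbf c=\mathbf A/\mathbf B$, and let $\lambda\in\overline{\mathbb Q}^*$. Then for all but finitely many $v\in\Omega_{\mathbb Q}$ we have $\log\max\{|\mathbf A_{\mathbf c,n}(\lambda)|_v,|\mathbf B_{\mathbf c,n}(\lambda)|_v\}=0$ for all $n\in\mathbb N$.
   Context: $\Omega_{\mathbb Q}$ is the set of places of $\mathbb Q$ (archimedean and $p$-adic, normalized so the product formula holds), and for each $v$ a fixed extension of $|\cdot|_v$ to $\overline{\mathbb Q}$ is used. The polynomials $\mathbf A_{\mathbf c,n},\mathbf B_{\mathbf c,n}\in\overline{\mathbb Q}[t]$ are defined by: $\mathbf A_{\mathbf c,0}=\mathbf A$, $\mathbf B_{\mathbf c,0}=\mathbf B$; if $\mathbf A(0)\neq 0$ then $\mathbf A_{\mathbf c,1}=\mathbf A^d+t\mathbf B^d$, $\mathbf B_{\mathbf c,1}=\mathbf A\mathbf B^{d-1}$, while if $\mathbf A(0)=0$ then $\mathbf A_{\mathbf c,1}=(\mathbf A^d+t\mathbf B^d)/t$, $\mathbf B_{\mathbf c,1}=\mathbf A\mathbf B^{d-1}/t$; and for $n\ge1$, $\mathbf A_{\mathbf c,n+1}=\mathbf A_{\mathbf c,n}^d+t\,\mathbf B_{\mathbf c,n}^d$, $\mathbf B_{\mathbf c,n+1}=\mathbf A_{\mathbf c,n}\mathbf B_{\mathbf c,n}^{d-1}$. (These give $\mathbf f_\lambda^n(\mathbf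 c(\lambda))=[\mathbf A_{\mathbf c,n}(\lambda):\mathbf B_{\mathbf c,n}(\lambda)]$ for $\mathbf f_\lambda(z)=(z^d+\lambda)/z$.) *)

theory Defs
  imports Complex_Main "HOL-Computational_Algebra.Computational_Algebra"
begin

datatype place = Arch | Fin nat

definition places :: "place set" where
  "places = {Arch} \<union> {Fin p | p. prime p}"

definition padic_abs :: "nat \<Rightarrow> rat \<Rightarrow> real" where
  "padic_abs p q = (if q = 0 then 0 else
     (let (a, b) = quotient_of q in
      real p powr (- (real (multiplicity (int p) a) - real (multiplicity (int p) b)))))"

definition place_abs_rat :: "place \<Rightarrow> rat \<Rightarrow> real" where
  "place_abs_rat v q = (case v of Arch \<Rightarrow> \<bar>real_of_rat q\<bar> | Fin p \<Rightarrow> padic_abs p q)"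

text \<open>Qbar is modelled as the algebraic complex numbers. An absolute value on Qbar.\<close>
definition abs_value_on_Qbar :: "(complex \<Rightarrow> real) \<Rightarrow> bool" where
  "abs_value_on_Qbar f \<longleftrightarrow>
     (\<forall>x. algebraic x \<longrightarrow> f x \<ge> 0 \<and> (f x = 0 \<longleftrightarrow> x = 0)) \<and>
     (\<forall>x y. algebraic x \<longrightarrow> algebraic y \<longrightarrow> f (x * y) = f x * f y) \<and>
     (\<forall>x y. algebraic x \<longrightarrow> algebraic y \<longrightarrow> f (x + y) \<le> f x + f y)"

definition extends_places :: "(place \<Rightarrow> complex \<Rightarrow> real) \<Rightarrow> bool" where
  "extends_places absv \<longleftrightarrow>
     (\<forall>v\<in>places. abs_value_on_Qbar (absv v) \<and>
        (\<forall>q. absv v (of_rat q) = place_abs_rat v q))"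

definition Qbar_poly :: "complex poly \<Rightarrow> bool" where
  "Qbar_poly P \<longleftrightarrow> (\<forall>i. algebraic (coeff P i))"

definition step_AB :: "nat \<Rightarrow> complex poly \<times> complex poly \<Rightarrow> complex poly \<times> complex poly" where
  "step_AB d ab = (fst ab ^ d + [:0, 1:] * snd ab ^ d, fst ab * snd ab ^ (d - 1))"

fun AB_seq :: "nat \<Rightarrow> complex poly \<Rightarrow> complex poly \<Rightarrow> nat \<Rightarrow> complex poly \<times> complex poly" where
  "AB_seq d A B 0 = (A, B)"
| "AB_seq d A B (Suc 0) =
     (if poly A 0 \<noteq> 0 then step_AB d (A, B)
      else ((A ^ d + [:0, 1:] * B ^ d) div [:0, 1:], (A * B ^ (d - 1)) div [:0, 1:]))"
| "AB_seq d A B (Suc (Suc n)) = step_AB d (AB_seq d A B (Suc n))"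

definition A_seq :: "nat \<Rightarrow> complex poly \<Rightarrow> complex poly \<Rightarrow> nat \<Rightarrow> complex poly" where
  "A_seq d A B n = fst (AB_seq d A B n)"

definition B_seq :: "nat \<Rightarrow> complex poly \<Rightarrow> complex poly \<Rightarrow> nat \<Rightarrow> complex poly" where
  "B_seq d A B n = snd (AB_seq d A B n)"

end

theory Submission imports Defs "HOL-Algebra.Algebraic_Closure_Type" begin

abbreviation CR :: "complex ring" where "CR \<equiv> ring_of_type_algebra"

lemma CR_field: "field CR" by (rule field_from_type_algebra)

lemma CR_simps [simp]: "carrier CR = UNIV" "mult CR = (*)" "add CR = (+)" "one CR = 1" "zero CR = 0"
  by (simp_all add: ring_of_type_algebra_def)

lemma CR_pow [simp]: "x [^]\<^bsub>CR\<^esub> (n::nat) = x ^ n"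
  by (induction n) (simp_all add: ring_of_type_algebra_def mult.commute)

lemma CR_eval: "ring.eval CR xs x = poly (Poly (rev xs)) x"
proof (induction xs)
  case Nil
  have r: "ring CR" by (rule ring_from_type_algebra)
  then show ?case using ring.eval.simps(1)[OF r] by simp
next
  case (Cons a xs)
  have r: "ring CR" by (rule ring_from_type_algebra)
  show ?case using Cons
    by (simp add: ring.eval.simps(2)[OF r] Poly_append poly_monom algebra_simps)
qed

lemma CR_ring: "ring CR" by (rule ring_from_type_algebra)
lemma CR_cring: "cring CR" by (rule cring_from_type_algebra)

lemma CR_neg [simp]: "a_inv CR x = - x"
  using abelian_group.minus_equality[OF ring.is_abelian_group[OF CR_ring], of "-x" x] by simp

lemma CR_inv: "x \<noteq> 0 \<Longrightarrow> m_inv CR x = inverse x"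
  using comm_monoid.comm_inv_char[OF cring.axioms(2)[OF CR_cring], of x "inverse x"] by simp

lemma Rats_subfield: "subfield (\<rat> :: complex set) CR"
proof (rule field.subfieldI'[OF CR_field])
  show "subring (\<rat> :: complex set) CR"
    by (rule ring.subringI[OF CR_ring]) auto
  show "m_inv CR k \<in> \<rat>" if "k \<in> \<rat> - {zero CR}" for k :: complex
    using that by (auto simp: CR_inv)
qed

lemma alg_to_ring: "algebraic (x::complex) \<Longrightarrow> ring.algebraic CR \<rat> x"
proof -
  assume "algebraic x"
  then obtain q where q: "\<forall>i. Polynomial.coeff q i \<in> \<rat>" "q \<noteq> 0" "poly q x = 0"
    unfolding algebraic_altdef by blast
  have "rev (coeffs q) \<in> carrier (\<rat>[X]\<^bsub>CR\<^esub>)"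
    unfolding univ_poly_def polynomial_def using q
    by (auto simp: hd_rev last_coeffs_eq_coeff_degree coeffs_def)
  moreover have "rev (coeffs q) \<noteq> []" using q by simp
  moreover have "ring.eval CR (rev (coeffs q)) x = zero CR" using q by (simp add: CR_eval)
  ultimately show ?thesis using ring.algebraicI[OF CR_ring] by (auto simp: over_def)
qed

lemma ring_to_alg: "ring.algebraic CR \<rat> (x::complex) \<Longrightarrow> algebraic x"
proof -
  assume a: "ring.algebraic CR \<rat> x"
  have dom: "domain CR" using CR_field field.axioms(1) by blast
  obtain p where p: "p \<in> carrier (\<rat>[X]\<^bsub>CR\<^esub>)" "p \<noteq> []" "ring.eval CR p x = zero CR"
    using domain.algebraicE[OF dom subfieldE(1)[OF Rats_subfield], of x] a by (auto simp: over_def)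
  have setp: "set p \<subseteq> \<rat>" and hd: "hd p \<noteq> 0" using p unfolding univ_poly_def polynomial_def by auto
  have "\<forall>i. Polynomial.coeff (Poly (rev p)) i \<in> \<rat>"
  proof
    fix i show "Polynomial.coeff (Poly (rev p)) i \<in> \<rat>"
      using setp by (auto simp: nth_default_def) (metis length_rev nth_mem set_rev subsetD)
  qed
  moreover have "Poly (rev p) \<noteq> 0"
  proof
    assume "Poly (rev p) = 0"
    hence "Polynomial.coeff (Poly (rev p)) (length p - 1) = 0" by simp
    moreover have "Polynomial.coeff (Poly (rev p)) (length p - 1) = hd p" using p(2)
      by (simp add: nth_default_def rev_nth hd_conv_nth)
    ultimately show False using hd by simp
  qed
  moreover have "poly (Poly (rev p)) x = 0" using p(3) by (simp add: CR_eval)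
  ultimately show ?thesis unfolding algebraic_altdef by blast
qed

lemma algebraic_add: "algebraic (x::complex) \<Longrightarrow> algebraic y \<Longrightarrow> algebraic (x + y)"
  and algebraic_mult: "algebraic (x::complex) \<Longrightarrow> algebraic y \<Longrightarrow> algebraic (x * y)"
proof -
  assume x: "algebraic x" and y: "algebraic y"
  have sf: "subfield {z \<in> carrier CR. ring.algebraic CR \<rat> z} CR"
    using field.subfield_of_algebraics[OF CR_field Rats_subfield] by (simp add: over_def)
  have xm: "x \<in> {z \<in> carrier CR. ring.algebraic CR \<rat> z}" "y \<in> {z \<in> carrier CR. ring.algebraic CR \<rat> z}"
    using x y alg_to_ring by auto
  show "algebraic (x + y)"
    using subringE(7)[OF subfieldE(1)[OF sf] xm] ring_to_alg by simp
  show "algebraic (x * y)"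
    using subringE(6)[OF subfieldE(1)[OF sf] xm] ring_to_alg by simp
qed


lemma algebraic_power: "algebraic (x::complex) \<Longrightarrow> algebraic (x ^ n)"
  by (induction n) (auto intro: algebraic_mult)

lemma algebraic_of_int [simp]: "algebraic (of_int n :: complex)"
  by (rule rat_imp_algebraic) simp

lemma algebraic_of_nat [simp]: "algebraic (of_nat n :: complex)"
  by (rule rat_imp_algebraic) simp

lemma algebraic_sum: "(\<And>i. i \<in> S \<Longrightarrow> algebraic (g i :: complex)) \<Longrightarrow> algebraic (sum g S)"
  by (induction S rule: infinite_finite_induct) (auto intro: algebraic_add)

lemma algebraic_poly: "Qbar_poly P \<Longrightarrow> algebraic x \<Longrightarrow> algebraic (poly P x)"
proof (induction P rule: pCons_induct)
  case (pCons a p)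
  have "algebraic a" using pCons.prems unfolding Qbar_poly_def
    by (metis coeff_pCons_0)
  moreover have "Qbar_poly p" using pCons.prems unfolding Qbar_poly_def
    by (metis coeff_pCons_Suc)
  ultimately show ?case using pCons by (auto intro!: algebraic_add algebraic_mult)
qed simp

locale av =
  fixes f :: "complex \<Rightarrow> real"
  assumes av: "abs_value_on_Qbar f"
begin

lemma nonneg: "algebraic x \<Longrightarrow> f x \<ge> 0" using av unfolding abs_value_on_Qbar_def by blast
lemma zero_iff: "algebraic x \<Longrightarrow> f x = 0 \<longleftrightarrow> x = 0" using av unfolding abs_value_on_Qbar_def by blast
lemma mult: "algebraic x \<Longrightarrow> algebraic y \<Longrightarrow> f (x * y) = f x * f y" using av unfolding abs_value_on_Qbar_def by blast
lemma tri: "algebraic x \<Longrightarrow> algebraic y \<Longrightarrow> f (x + y) \<le> f x + f y" using av unfolding abs_value_on_Qbar_def by blast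

lemma zero [simp]: "f 0 = 0" using zero_iff[of 0] by simp

lemma one [simp]: "f 1 = 1"
proof -
  have "f 1 = f 1 * f 1" using mult[of 1 1] by simp
  moreover have "f 1 \<noteq> 0" using zero_iff[of 1] by simp
  ultimately show ?thesis by (metis mult_cancel_left1)
qed

lemma power: "algebraic x \<Longrightarrow> f (x ^ n) = f x ^ n"
  by (induction n) (simp_all add: mult algebraic_power)

lemma minus_one [simp]: "f (-1) = 1"
proof -
  have "f (-1) ^ 2 = 1" using mult[of "-1" "-1"] by (simp add: power2_eq_square)
  moreover have "f (-1) \<ge> 0" using nonneg[of "-1"] by simp
  ultimately show ?thesis using power2_eq_1_iff by force
qed

lemma uminus: "algebraic x \<Longrightarrow> f (- x) = f x"
  using mult[of "-1" x] by simp

lemma inverse: "algebraic x \<Longrightarrow> x \<noteq> 0 \<Longrightarrow> f (inverse x) * f x = 1"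
  using mult[of "inverse x" x] by auto

end

locale nonarch = av +
  assumes int_le: "\<And>n::int. f (of_int n) \<le> 1"
begin

lemma sum_le: "(\<And>i. i \<in> S \<Longrightarrow> algebraic (g i)) \<Longrightarrow> f (sum g S) \<le> (\<Sum>i\<in>S. f (g i))"
proof (induction S rule: infinite_finite_induct)
  case (insert x F)
  then show ?case using tri[of "g x" "sum g F"] algebraic_sum[of F g] by auto
qed auto

lemma growth_aux:
  fixes r :: real
  assumes "\<And>N::nat. r ^ N \<le> real N + 1" "r \<ge> 0"
  shows "r \<le> 1"
proof (rule ccontr)
  assume "\<not> r \<le> 1"
  define s where "s = sqrt r"
  have s1: "s > 1" using \<open>\<not> r \<le> 1\<close> unfolding s_def by simp
  obtain N :: nat where N: "real N * (s - 1)^2 > 2" "N \<ge> 1"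
  proof -
    obtain N :: nat where "real N > 2 / (s-1)^2" using reals_Archimedean2 by blast
    moreover have "(s-1)^2 > 0" using s1 by simp
    ultimately have "real N * (s - 1)^2 > 2" by (simp add: field_simps)
    moreover have "N \<ge> 1" using calculation s1 by (cases N) auto
    ultimately show ?thesis using that by blast
  qed
  have "s ^ N \<ge> 1 + real N * (s - 1)" using Bernoulli_inequality[of "s-1" N] s1 by simp
  hence "s ^ N \<ge> real N * (s - 1)" by simp
  hence "(s ^ N)^2 \<ge> (real N * (s - 1))^2" using s1 by (intro power_mono) auto
  moreover have "(s ^ N)^2 = r ^ N"
  proof -
    have "(s ^ N)^2 = (s^2)^N" by (metis power_mult mult.commute)
    moreover have "s^2 = r" unfolding s_def using assms(2) by simp
    ultimately show ?thesis by simp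
  qed
  ultimately have "r ^ N \<ge> real N^2 * (s - 1)^2" by (simp add: power_mult_distrib)
  hence "real N^2 * (s-1)^2 \<le> real N + 1" using assms(1)[of N] by linarith
  moreover have "real N^2 * (s-1)^2 > 2 * real N"
  proof -
    have "real N * (real N * (s-1)^2) > real N * 2" using N by (intro mult_strict_left_mono) auto
    thus ?thesis by (simp add: power2_eq_square algebra_simps)
  qed
  ultimately show False using N by linarith
qed

lemma ultra: "algebraic x \<Longrightarrow> algebraic y \<Longrightarrow> f (x + y) \<le> max (f x) (f y)"
proof -
  assume x: "algebraic x" and y: "algebraic y"
  define M where "M = max (f x) (f y)"
  have M0: "M \<ge> 0" unfolding M_def using nonneg[OF x] by simp
  show ?thesis
  proof (cases "M = 0")
    case True
    then have "x = 0" "y = 0" using zero_iff[OF x] zero_iff[OF y] nonneg[OF x] nonneg[OF y]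
      unfolding M_def by (auto simp: max_def split: if_splits)
    then show ?thesis by simp
  next
    case False
    hence Mpos: "M > 0" using M0 by simp
    have bound: "f (x + y) ^ N \<le> (real N + 1) * M ^ N" for N
    proof -
      have "f (x + y) ^ N = f ((x+y)^N)" using power[of "x+y" N] x y algebraic_add by simp
      also have "(x+y)^N = (\<Sum>k\<le>N. of_nat (N choose k) * x^k * y^(N-k))" by (rule binomial_ring)
      also have "f \<dots> \<le> (\<Sum>k\<le>N. f (of_nat (N choose k) * x^k * y^(N-k)))"
        by (rule sum_le) (auto intro!: algebraic_mult algebraic_power x y)
      also have "\<dots> \<le> (\<Sum>k\<le>N. M ^ N)"
      proof (rule sum_mono)
        fix k assume k: "k \<in> {..N}"
        have "f (of_nat (N choose k) * x^k * y^(N-k)) = f (of_nat (N choose k)) * f x ^ k * f y ^ (N-k)"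
          using x y by (simp add: mult power algebraic_mult algebraic_power)
        also have "\<dots> \<le> 1 * M ^ k * M ^ (N - k)"
          using int_le[of "int (N choose k)"] nonneg[OF x] nonneg[OF y] nonneg[of "of_nat (N choose k)"]
          by (intro mult_mono power_mono) (auto simp: M_def)
        also have "\<dots> = M ^ N" using k by (simp add: power_add[symmetric])
        finally show "f (of_nat (N choose k) * x^k * y^(N-k)) \<le> M ^ N" .
      qed
      also have "\<dots> = (real N + 1) * M ^ N" by simp
      finally show ?thesis .
    qed
    have "f (x+y) / M \<le> 1"
    proof (rule growth_aux)
      fix N :: nat
      have "(f (x+y) / M) ^ N = f (x + y) ^ N / M ^ N" by (simp add: power_divide)
      also have "\<dots> \<le> real N + 1" using bound[of N] Mpos by (simp add: divide_le_eq)
      finally show "(f (x+y) / M) ^ N \<le> real N + 1" .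
    next
      show "f (x+y) / M \<ge> 0" using nonneg[of "x+y"] x y algebraic_add Mpos by simp
    qed
    then show ?thesis using Mpos unfolding M_def by (simp add: divide_le_eq)
  qed
qed

lemma strict: "algebraic x \<Longrightarrow> algebraic y \<Longrightarrow> f y < f x \<Longrightarrow> f (x + y) = f x"
proof -
  assume x: "algebraic x" and y: "algebraic y" and lt: "f y < f x"
  have xy: "algebraic (x + y)" using x y by (rule algebraic_add)
  have "f (x + y) \<le> f x" using ultra[OF x y] lt by simp
  moreover have "f x \<le> max (f (x + y)) (f (-y))"
    using ultra[OF xy, of "-y"] y by simp
  ultimately show ?thesis using uminus[OF y] lt by (auto simp: max_def split: if_splits)
qed

lemma sum_le_bound: "(\<And>i. i \<in> S \<Longrightarrow> algebraic (g i)) \<Longrightarrow> (\<And>i. i \<in> S \<Longrightarrow> f (g i) \<le> B) \<Longrightarrow> B \<ge> 0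
   \<Longrightarrow> f (sum g S) \<le> B"
proof (induction S rule: infinite_finite_induct)
  case (insert x F)
  have "f (sum g (insert x F)) = f (g x + sum g F)" using insert by simp
  also have "\<dots> \<le> max (f (g x)) (f (sum g F))"
    using insert by (intro ultra algebraic_sum) auto
  also have "\<dots> \<le> B" using insert by auto
  finally show ?case .
qed auto

end


lemma place_fin: "v \<in> places \<Longrightarrow> v \<noteq> Arch \<Longrightarrow> \<exists>p. v = Fin p \<and> Factorial_Ring.prime p"
  unfolding places_def by auto

lemma padic_abs_int: "Factorial_Ring.prime p \<Longrightarrow> n \<noteq> 0 \<Longrightarrow> padic_abs p (of_int n) = real p powr (- real (multiplicity (int p) n))"
  unfolding padic_abs_def by (simp add: quotient_of_int)

lemma av_place: "extends_places absv \<Longrightarrow> v \<in> places \<Longrightarrow> av (absv v)"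
  unfolding extends_places_def av_def by blast

lemma absv_int: "extends_places absv \<Longrightarrow> v \<in> places \<Longrightarrow> absv v (of_int n) = place_abs_rat v (of_int n)"
  unfolding extends_places_def by (metis of_rat_of_int_eq)

lemma nonarch_place: "extends_places absv \<Longrightarrow> Factorial_Ring.prime p \<Longrightarrow> Fin p \<in> places \<Longrightarrow> nonarch (absv (Fin p))"
proof -
  assume e: "extends_places absv" and p: "Factorial_Ring.prime p" and v: "Fin p \<in> places"
  show ?thesis
  proof (intro nonarch.intro nonarch_axioms.intro)
    show "av (absv (Fin p))" using e v by (rule av_place)
    fix n :: int
    have "absv (Fin p) (of_int n) = place_abs_rat (Fin p) (of_int n)" using e v by (rule absv_int)
    also have "\<dots> \<le> 1"
    proof (cases "n = 0")
      case True then show ?thesis by (simp add: place_abs_rat_def padic_abs_def)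
    next
      case False
      have "real p \<ge> 1" using p prime_gt_0_nat by (simp add: Suc_le_eq)
      hence "real p powr (- real (multiplicity (int p) n)) \<le> 1"
        by (simp add: powr_minus_divide ge_one_powr_ge_zero)
      then show ?thesis using False p by (simp add: place_abs_rat_def padic_abs_int)
    qed
    finally show "absv (Fin p) (of_int n) \<le> 1" .
  qed
qed

lemma absv_int_unit: "extends_places absv \<Longrightarrow> Factorial_Ring.prime p \<Longrightarrow> Fin p \<in> places \<Longrightarrow> c \<noteq> 0 \<Longrightarrow> \<not> int p dvd c
   \<Longrightarrow> absv (Fin p) (of_int c) = 1"
proof -
  assume e: "extends_places absv" and p: "Factorial_Ring.prime p" and v: "Fin p \<in> places" and c: "c \<noteq> 0" "\<not> int p dvd c"
  have "absv (Fin p) (of_int c) = place_abs_rat (Fin p) (of_int c)" using e v by (rule absv_int)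
  also have "\<dots> = 1" using c p
    by (simp add: place_abs_rat_def padic_abs_int not_dvd_imp_multiplicity_0 prime_gt_0_nat)
  finally show ?thesis .
qed

lemma finite_big:
  assumes e: "extends_places absv" and alg: "algebraic \<alpha>"
  shows "finite {v \<in> places. absv v \<alpha> > 1}"
proof -
  obtain q where q: "\<And>i. Polynomial.coeff q i \<in> \<int>" "q \<noteq> 0" "poly q \<alpha> = 0"
    using Polynomial.algebraicE[OF alg] by blast
  obtain ci where ci: "Polynomial.lead_coeff q = of_int ci" using q(1) by (meson Ints_cases)
  have ci0: "ci \<noteq> 0" using ci q(2) by auto
  have "{v \<in> places. absv v \<alpha> > 1} \<subseteq> insert Arch (Fin ` {..nat \<bar>ci\<bar>})"
  proof
    fix v assume vin: "v \<in> {v \<in> places. absv v \<alpha> > 1}"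
    show "v \<in> insert Arch (Fin ` {..nat \<bar>ci\<bar>})"
    proof (rule ccontr)
      assume nv: "v \<notin> insert Arch (Fin ` {..nat \<bar>ci\<bar>})"
      then obtain p where vp: "v = Fin p" "Factorial_Ring.prime p" using vin place_fin by blast
      have pbig: "p > nat \<bar>ci\<bar>" using nv vp by auto
      have ndvd: "\<not> int p dvd ci"
      proof
        assume "int p dvd ci"
        hence "int p \<le> \<bar>ci\<bar>" using dvd_imp_le_int[OF ci0] by force
        thus False using pbig by linarith
      qed
      define f where "f = absv v"
      interpret nonarch f unfolding f_def vp using nonarch_place e vp vin by blast
      have big: "f \<alpha> > 1" using vin f_def by simp
      have fc: "f (of_int ci) = 1" unfolding f_def vp using absv_int_unit[OF e vp(2) _ ci0 ndvd] vin vp by simp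
      have coeff_alg: "algebraic (Polynomial.coeff q i)" for i using q(1) by (intro rat_imp_algebraic) (simp add: Ints_subset_Rats[THEN subsetD])
      have coeff_le: "f (Polynomial.coeff q i) \<le> 1" for i using q(1)[of i] int_le by (auto elim: Ints_cases)
      show False
      proof (cases "Polynomial.degree q")
        case 0
        have "poly q \<alpha> = Polynomial.coeff q 0" using 0 by (simp add: poly_altdef)
        moreover have "Polynomial.coeff q 0 = of_int ci" using ci 0 by simp
        ultimately show False using q(3) ci0 by simp
      next
        case (Suc m)
        have "0 = (\<Sum>i\<le>Suc m. Polynomial.coeff q i * \<alpha> ^ i)" using q(3) Suc by (simp add: poly_altdef)
        also have "\<dots> = (\<Sum>i\<le>m. Polynomial.coeff q i * \<alpha> ^ i) + of_int ci * \<alpha> ^ Suc m"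
          using ci Suc by simp
        finally have eq: "of_int ci * \<alpha> ^ Suc m = - (\<Sum>i\<le>m. Polynomial.coeff q i * \<alpha> ^ i)"
          by (simp add: eq_neg_iff_add_eq_0 add.commute)
        have "f (of_int ci * \<alpha> ^ Suc m) = f \<alpha> ^ Suc m" using fc alg using mult[OF algebraic_of_int algebraic_power[OF alg], of ci "Suc m"] power[OF alg, of "Suc m"] by simp
        moreover have "f (- (\<Sum>i\<le>m. Polynomial.coeff q i * \<alpha> ^ i)) \<le> f \<alpha> ^ m"
        proof -
          have "f (\<Sum>i\<le>m. Polynomial.coeff q i * \<alpha> ^ i) \<le> f \<alpha> ^ m"
          proof (rule sum_le_bound)
            fix i assume i: "i \<in> {..m}"
            show "algebraic (Polynomial.coeff q i * \<alpha> ^ i)" using coeff_alg alg by (intro algebraic_mult algebraic_power)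
            have "f (Polynomial.coeff q i * \<alpha> ^ i) = f (Polynomial.coeff q i) * f \<alpha> ^ i"
              using coeff_alg alg by (simp add: mult power algebraic_power)
            also have "\<dots> \<le> 1 * f \<alpha> ^ m"
              using coeff_le[of i] big i nonneg[OF coeff_alg[of i]]
              by (intro mult_mono power_increasing) auto
            finally show "f (Polynomial.coeff q i * \<alpha> ^ i) \<le> f \<alpha> ^ m" by simp
          qed (use big in simp)
          thus ?thesis using uminus algebraic_sum coeff_alg alg
            by (metis (no_types, lifting) algebraic_mult algebraic_power)
        qed
        ultimately have "f \<alpha> ^ Suc m \<le> f \<alpha> ^ m" using eq by simp
        moreover have "f \<alpha> ^ m < f \<alpha> ^ Suc m" using big by simp
        ultimately show False by simp
      qed
    qed
  qed
  thus ?thesis by (rule finite_subset) simp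
qed

lemma finite_nonunit:
  assumes e: "extends_places absv" and alg: "algebraic \<alpha>" and nz: "\<alpha> \<noteq> 0"
  shows "finite {v \<in> places. absv v \<alpha> \<noteq> 1}"
proof -
  have "{v \<in> places. absv v \<alpha> \<noteq> 1} \<subseteq> {v \<in> places. absv v \<alpha> > 1} \<union> {v \<in> places. absv v (inverse \<alpha>) > 1}"
  proof safe
    fix v assume v: "v \<in> places" "absv v \<alpha> \<noteq> 1" "\<not> absv v (inverse \<alpha>) > 1"
    interpret av "absv v" using av_place e v(1) by blast
    have "absv v (inverse \<alpha>) * absv v \<alpha> = 1" using inverse alg nz by blast
    moreover have "absv v \<alpha> > 0" using nonneg[OF alg] zero_iff[OF alg] nz by force
    moreover have "absv v (inverse \<alpha>) \<ge> 0" using nonneg alg by blast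
    ultimately show "absv v \<alpha> > 1" using v(2,3)
    proof -
      assume h: "absv v (inverse \<alpha>) * absv v \<alpha> = 1" "absv v \<alpha> > 0" "absv v (inverse \<alpha>) \<ge> 0"
      show ?thesis
      proof (rule ccontr)
        assume "\<not> absv v \<alpha> > 1"
        hence lt: "absv v \<alpha> < 1" using v(2) by simp
        have pos: "absv v (inverse \<alpha>) > 0" using h by (metis less_eq_real_def mult_zero_left zero_neq_one)
        have "absv v (inverse \<alpha>) * absv v \<alpha> < absv v (inverse \<alpha>) * 1"
          using pos lt by (intro mult_strict_left_mono) auto
        thus False using h(1) v(3) by simp
      qed
    qed
  qed
  thus ?thesis using finite_big[OF e alg] finite_big[OF e algebraic_inverse[OF alg]]
    by (meson finite_Un finite_subset)
qed


lemma (in nonarch) step: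
  assumes a: "algebraic a" and b: "algebraic b" and l: "algebraic lam" and fl: "f lam = 1"
    and m: "max (f a) (f b) = 1" and d: "d \<ge> 2"
  shows "max (f (a ^ d + lam * b ^ d)) (f (a * b ^ (d - 1))) = 1"
proof -
  have fa: "f a \<ge> 0" "f a \<le> 1" and fb: "f b \<ge> 0" "f b \<le> 1" using nonneg a b m by auto
  have alg1: "algebraic (a ^ d)" "algebraic (lam * b ^ d)" using a b l by (auto intro: algebraic_power algebraic_mult)
  have e1: "f (a ^ d) = f a ^ d" using power a by blast
  have e2: "f (lam * b ^ d) = f b ^ d" using mult[OF l algebraic_power[OF b]] power[OF b] fl by simp
  have e3: "f (a * b ^ (d - 1)) = f a * f b ^ (d - 1)" using mult[OF a algebraic_power[OF b]] power[OF b] by simp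
  have u: "f (a ^ d + lam * b ^ d) \<le> 1"
  proof -
    have "max (f a ^ d) (f b ^ d) \<le> 1" using power_le_one[OF fa] power_le_one[OF fb] by simp
    then show ?thesis using ultra[OF alg1] unfolding e1 e2 by (rule order_trans[rotated])
  qed
  have u3: "f (a * b ^ (d - 1)) \<le> 1" using e3 fa fb by (simp add: mult_le_one power_le_one)
  have nn: "f (a ^ d + lam * b ^ d) \<ge> 0" "f (a * b ^ (d - 1)) \<ge> 0"
    using nonneg alg1 algebraic_add algebraic_mult a algebraic_power b by auto
  have pl: "x ^ d < 1" if "0 \<le> x" "x < 1" for x :: real using that d by (simp add: power_less_one_iff)
  consider "f a = 1" "f b = 1" | "f a = 1" "f b < 1" | "f a < 1" "f b = 1" using m fa fb
    by (metis less_eq_real_def max_def)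
  then show ?thesis
  proof cases
    case 1
    then have "f (a * b ^ (d - 1)) = 1" using e3 by simp
    then show ?thesis using u nn by simp
  next
    case 2
    have "f (a ^ d + lam * b ^ d) = f (a ^ d)" using strict[OF alg1] e1 e2 2 pl fb by simp
    then show ?thesis using 2 e1 u3 by simp
  next
    case 3
    have "f (lam * b ^ d + a ^ d) = f (lam * b ^ d)" using strict[OF alg1(2) alg1(1)] e1 e2 3 pl fa by simp
    then show ?thesis using 3 e2 u3 by (simp add: add.commute)
  qed
qed

lemma X_dvd_poly0: "poly (P::complex poly) 0 = 0 \<Longrightarrow> [:0, 1:] dvd P"
  using dvd_iff_poly_eq_0[of 0 P] by simp

lemma poly_div_X: "[:0, 1:] dvd (P::complex poly) \<Longrightarrow> x \<noteq> 0 \<Longrightarrow> poly (P div [:0, 1:]) x = poly P x / x"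
proof -
  assume "[:0, 1:] dvd P" "x \<noteq> 0"
  then obtain Q where Q: "P = [:0, 1:] * Q" by blast
  have "P div [:0, 1:] = Q" unfolding Q by (rule nonzero_mult_div_cancel_left) simp
  then show ?thesis using \<open>x \<noteq> 0\<close> Q by simp
qed

theorem proposition4p1:
  fixes d :: nat and A B :: "complex poly" and lam :: complex
    and absv :: "place \<Rightarrow> complex \<Rightarrow> real"
  assumes "d \<ge> 2"
    and "Qbar_poly A" and "Qbar_poly B"
    and "A \<noteq> 0" and "B \<noteq> 0" and "coprime A B"
    and "algebraic lam" and "lam \<noteq> 0"
    and "extends_places absv"
  shows "finite {v \<in> places. \<not> (\<forall>n::nat.
           ln (max (absv v (poly (A_seq d A B n) lam)) (absv v (poly (B_seq d A B n) lam))) = 0)}"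
proof -
  note d = assms(1) and e = assms(9) and l = assms(7) and l0 = assms(8)
  define a where "a n = poly (A_seq d A B n) lam" for n
  define b where "b n = poly (B_seq d A B n) lam" for n
  have a0: "a 0 = poly A lam" and b0: "b 0 = poly B lam" by (simp_all add: a_def b_def A_seq_def B_seq_def)
  have alga0: "algebraic (a 0)" "algebraic (b 0)" using a0 b0 algebraic_poly assms(2,3) l by auto
  have not_both: "a 0 \<noteq> 0 \<or> b 0 \<noteq> 0"
  proof (rule ccontr)
    assume "\<not> (a 0 \<noteq> 0 \<or> b 0 \<noteq> 0)"
    hence "[:-lam, 1:] dvd A" "[:-lam, 1:] dvd B" using a0 b0 dvd_iff_poly_eq_0[of "-lam"] by auto
    hence "is_unit [:-lam, 1:]" using assms(6) coprime_common_divisor by blast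
    thus False by (simp add: is_unit_iff_degree)
  qed
  have recS: "a (Suc (Suc n)) = a (Suc n) ^ d + lam * b (Suc n) ^ d \<and> b (Suc (Suc n)) = a (Suc n) * b (Suc n) ^ (d - 1)" for n
  proof -
    have "AB_seq d A B (Suc (Suc n)) = step_AB d (AB_seq d A B (Suc n))" by simp
    then show ?thesis unfolding a_def b_def A_seq_def B_seq_def step_AB_def
      by (simp only: fst_conv snd_conv poly_add poly_mult poly_power poly_pCons poly_0) simp
  qed
  have rec1: "(a 1 = a 0 ^ d + lam * b 0 ^ d \<and> b 1 = a 0 * b 0 ^ (d - 1)) \<or>
              (a 1 = (a 0 ^ d + lam * b 0 ^ d) / lam \<and> b 1 = (a 0 * b 0 ^ (d - 1)) / lam)"
  proof (cases "poly A 0 = 0")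
    case False
    then show ?thesis by (simp add: a_def b_def A_seq_def B_seq_def step_AB_def)
  next
    case True
    have dA: "[:0, 1:] dvd A" using True by (rule X_dvd_poly0)
    have "[:0, 1:] dvd A ^ d" using dvd_trans[OF dA dvd_power[of d A]] d by simp
    hence d1: "[:0, 1:] dvd A ^ d + [:0, 1:] * B ^ d" by (rule dvd_add[OF _ dvd_triv_left])
    have d2: "[:0, 1:] dvd A * B ^ (d - 1)" using dA by simp
    show ?thesis using True poly_div_X[OF d1 l0] poly_div_X[OF d2 l0]
      by (simp add: a_def b_def A_seq_def B_seq_def a0 b0)
  qed
  define Bad where "Bad = {Arch} \<union> {v \<in> places. absv v lam \<noteq> 1} \<union> {v \<in> places. absv v (a 0) > 1}
     \<union> {v \<in> places. absv v (b 0) > 1} \<union> (if a 0 \<noteq> 0 then {v \<in> places. absv v (a 0) \<noteq> 1} else {})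
     \<union> (if b 0 \<noteq> 0 then {v \<in> places. absv v (b 0) \<noteq> 1} else {})"
  have finBad: "finite Bad" unfolding Bad_def
    using finite_nonunit[OF e l l0] finite_big[OF e alga0(1)] finite_big[OF e alga0(2)]
      finite_nonunit[OF e alga0(1)] finite_nonunit[OF e alga0(2)] by auto
  have good: "\<forall>n. max (absv v (a n)) (absv v (b n)) = 1" if v: "v \<in> places" "v \<notin> Bad" for v
  proof -
    obtain p where vp: "v = Fin p" "Factorial_Ring.prime p" using v place_fin unfolding Bad_def by blast
    define f where "f = absv v"
    interpret nonarch f unfolding f_def vp using nonarch_place e vp v by blast
    have fl: "f lam = 1" using v unfolding Bad_def f_def by auto
    have il: "f (inverse lam) = 1" using inverse[OF l l0] fl by simp
    have base: "max (f (a 0)) (f (b 0)) = 1"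
    proof -
      have "f (a 0) \<le> 1" "f (b 0) \<le> 1" using v unfolding Bad_def f_def by auto
      moreover have "a 0 \<noteq> 0 \<Longrightarrow> f (a 0) = 1" "b 0 \<noteq> 0 \<Longrightarrow> f (b 0) = 1"
        using v unfolding Bad_def f_def by auto
      ultimately show ?thesis using not_both by (auto simp: max_def)
    qed
    have IH: "algebraic (a n) \<and> algebraic (b n) \<and> max (f (a n)) (f (b n)) = 1" for n
    proof (induction n rule: nat_less_induct)
      case (1 n)
      show ?case
      proof (cases n)
        case 0 then show ?thesis using alga0 base by simp
      next
        case (Suc m)
        note st = step[OF alga0(1) alga0(2) l fl base d]
        show ?thesis
        proof (cases m)
          case 0
          have alg1: "algebraic (a 0 ^ d + lam * b 0 ^ d)" "algebraic (a 0 * b 0 ^ (d - 1))"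
            using alga0 l by (auto intro!: algebraic_add algebraic_mult algebraic_power)
          have fdiv: "f (x / lam) = f x" if "algebraic x" for x
            using mult[OF that algebraic_inverse[OF l]] il by (simp add: divide_inverse)
          have adiv: "algebraic (x / lam)" if "algebraic x" for x
            using algebraic_mult[OF that algebraic_inverse[OF l]] by (simp add: divide_inverse)
          have n1: "n = 1" using Suc 0 by simp
          from rec1 show ?thesis
          proof
            assume h: "a 1 = a 0 ^ d + lam * b 0 ^ d \<and> b 1 = a 0 * b 0 ^ (d - 1)"
            show ?thesis unfolding n1 using h alg1 st by simp
          next
            assume h: "a 1 = (a 0 ^ d + lam * b 0 ^ d) / lam \<and> b 1 = (a 0 * b 0 ^ (d - 1)) / lam"
            show ?thesis unfolding n1 using h adiv[OF alg1(1)] adiv[OF alg1(2)] fdiv[OF alg1(1)] fdiv[OF alg1(2)] st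
              by simp
          qed
        next
          case (Suc k)
          have "algebraic (a (Suc k)) \<and> algebraic (b (Suc k)) \<and> max (f (a (Suc k))) (f (b (Suc k))) = 1"
            using "1.IH" \<open>n = Suc m\<close> Suc by simp
          then have h1: "algebraic (a (Suc k))" "algebraic (b (Suc k))" "max (f (a (Suc k))) (f (b (Suc k))) = 1"
            by auto
          have n2: "n = Suc (Suc k)" using \<open>n = Suc m\<close> Suc by simp
          have "algebraic (a (Suc k) ^ d + lam * b (Suc k) ^ d)" "algebraic (a (Suc k) * b (Suc k) ^ (d - 1))"
            using h1 l by (auto intro!: algebraic_add algebraic_mult algebraic_power)
          then show ?thesis unfolding n2 using recS[of k] step[OF h1(1) h1(2) l fl h1(3) d] by simp
        qed
      qed
    qed
    then show ?thesis unfolding f_def by blast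
  qed
  have "{v \<in> places. \<not> (\<forall>n::nat.
           ln (max (absv v (poly (A_seq d A B n) lam)) (absv v (poly (B_seq d A B n) lam))) = 0)} \<subseteq> Bad"
  proof
    fix v assume vin: "v \<in> {v \<in> places. \<not> (\<forall>n::nat.
           ln (max (absv v (poly (A_seq d A B n) lam)) (absv v (poly (B_seq d A B n) lam))) = 0)}"
    then obtain n where v: "v \<in> places"
      and ne: "ln (max (absv v (poly (A_seq d A B n) lam)) (absv v (poly (B_seq d A B n) lam))) \<noteq> 0"
      by blast
    show "v \<in> Bad"
    proof (rule ccontr)
      assume "v \<notin> Bad"
      then have "max (absv v (a n)) (absv v (b n)) = 1" using good v by blast
      then show False using ne unfolding a_def b_def by simp
    qed
  qed
  thus ?thesis using finBad by (rule finite_subset)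
qed

end
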